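(* For $\theta\in(-2\pi,2\pi)$ define $$f(\theta)=8\cosh^{-1}\!\left(\frac{\cos\left(\frac{\pi}{4}\right)+\cos^2\left(\frac{\pi}{4}+\frac{\theta}{16}\right)}{\sin^2\left(\frac{\pi}{4}+\frac{\theta}{16}\right)}\right)+8\cosh^{-1}\!\left(\frac{\cos\left(\frac{\pi}{4}\right)+\cos^2\left(\frac{\pi}{4}-\frac{\theta}{16}\right)}{\sin^2\left(\frac{\pi}{4}-\frac{\theta}{16}\right)}\right),$$ which is the sum of the perimeters of the regular hyperbolic octagons of areas $2\pi-\theta$ and $2\pi+\theta$. Then $f(\theta)\geq 2\cdot 8\cosh^{-1}(\sqrt{2}+1)$ for all $\theta\in(-2\pi,2\pi)$. *)

theory Defs
  imports Complex_Main
begin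

definition octf :: "real \<Rightarrow> real" where
  "octf \<theta> =
     8 * arcosh ((cos (pi/4) + (cos (pi/4 + \<theta>/16))^2) / (sin (pi/4 + \<theta>/16))^2)
   + 8 * arcosh ((cos (pi/4) + (cos (pi/4 - \<theta>/16))^2) / (sin (pi/4 - \<theta>/16))^2)"

end

theory Submission
  imports Defs
begin

lemma alg:
  fixes c S T :: real
  assumes c: "c > 0" "c^2 = 1/2" and S: "S > 0" "T > 0" "S + T = 1" "S*T > 1/8"
  defines "u \<equiv> (c+T)/S" and "v \<equiv> (c+S)/T"
  shows "u \<ge> 1" "v \<ge> 1" "u*v + sqrt (u^2-1) * sqrt (v^2-1) \<ge> 2*(2*c+1)^2 - 1"
proof -
  define p where "p = S*T"
  have pp: "p > 0" using S unfolding p_def by simp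
  have TS: "(T-S)^2 = 1 - 4*p"
  proof -
    have "(T-S)^2 = (S+T)^2 - 4*(S*T)" by (simp add: power2_eq_square algebra_simps)
    thus ?thesis using S unfolding p_def by simp
  qed
  have p4: "4*p \<le> 1" using TS by (smt (verit) zero_le_power2)
  have cge: "c*c = 1/2" using c by (simp add: power2_eq_square)
  have q: "(c+T-S)*(c+S-T) = 4*p - 1/2"
  proof -
    have "(c+T-S)*(c+S-T) = c^2 - (T-S)^2" by (simp add: power2_eq_square algebra_simps)
    then show ?thesis using TS c by simp
  qed
  have ctsp: "c+T-S \<ge> 0" "c+S-T \<ge> 0"
  proof -
    have "(T-S)^2 \<le> c^2" using TS c S unfolding p_def by simp
    hence "\<bar>T-S\<bar> \<le> c" using c by (metis abs_le_square_iff abs_of_pos)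
    thus "c+T-S \<ge> 0" "c+S-T \<ge> 0" by auto
  qed
  show u1: "u \<ge> 1" using S ctsp unfolding u_def by simp
  show v1: "v \<ge> 1" using S ctsp unfolding v_def by simp
  have uv: "u*v = 1 + (c+1)*c/p"
  proof -
    have e1: "(c+T)*(c+S) = c*c + c*(S+T) + S*T" by (simp add: algebra_simps)
    have e2: "(c+T)*(c+S) = (c+1)*c + p" unfolding e1 p_def using cge S(3) by (simp add: algebra_simps)
    have "u*v = (c+T)*(c+S)/p" unfolding u_def v_def p_def by simp
    also have "\<dots> = ((c+1)*c + p)/p" using e2 by simp
    also have "\<dots> = 1 + (c+1)*c/p" using pp by (simp add: add_divide_distrib)
    finally show ?thesis .
  qed
  have u2: "u^2-1 = (c+1)*(c+T-S)/S^2"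
  proof -
    have "u^2-1 = ((c+T)^2 - S^2)/S^2" unfolding u_def using S by (simp add: power_divide diff_divide_distrib)
    also have "(c+T)^2 - S^2 = (c+T-S)*(c+T+S)" by (simp add: power2_eq_square algebra_simps)
    also have "c+T+S = c+1" using S by simp
    finally show ?thesis by (simp add: mult.commute)
  qed
  have v2: "v^2-1 = (c+1)*(c+S-T)/T^2"
  proof -
    have "v^2-1 = ((c+S)^2 - T^2)/T^2" unfolding v_def using S by (simp add: power_divide diff_divide_distrib)
    also have "(c+S)^2 - T^2 = (c+S-T)*(c+S+T)" by (simp add: power2_eq_square algebra_simps)
    also have "c+S+T = c+1" using S by simp
    finally show ?thesis by (simp add: mult.commute)
  qed
  define r where "r = sqrt (4*p - 1/2)"
  have p8: "4*p - 1/2 \<ge> 0" using S(4) p_def by linarith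
  have r0: "r \<ge> 0" unfolding r_def using p8 by simp
  have r2: "r^2 = 4*p - 1/2" unfolding r_def using p8 by (intro real_sqrt_pow2)
  have prod: "(u^2-1)*(v^2-1) = ((c+1)*r/p)^2"
  proof -
    have "(u^2-1)*(v^2-1) = (c+1)^2*((c+T-S)*(c+S-T))/(S*T)^2"
      unfolding u2 v2 by (simp add: power2_eq_square mult_ac)
    also have "\<dots> = (c+1)^2*r^2/p^2" unfolding q r2 p_def ..
    finally show ?thesis by (simp add: power_divide power_mult_distrib)
  qed
  have sq: "sqrt (u^2-1) * sqrt (v^2-1) = (c+1)*r/p"
  proof -
    have "sqrt (u^2-1) * sqrt (v^2-1) = sqrt ((u^2-1)*(v^2-1))" by (simp only: real_sqrt_mult)
    also have "\<dots> = \<bar>(c+1)*r/p\<bar>" unfolding prod by (rule real_sqrt_abs)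
    also have "\<dots> = (c+1)*r/p" using r0 c pp by simp
    finally show ?thesis .
  qed
  have rc: "r \<le> c"
  proof -
    have "r^2 \<le> c^2" using r2 p4 c(2) by linarith
    moreover have "0 \<le> c" using c(1) by linarith
    ultimately show ?thesis by (rule power2_le_imp_le)
  qed
  have key: "(c+1)*(c+r) \<ge> 4*(2*c+1)*p"
  proof -
    have pe: "4*p = r^2 + 1/2" using r2 by linarith
    have id: "(c+1)*(c+r) - (2*c+1)*(r^2 + 1/2) = r*(c+1 - (2*c+1)*r) + (c*c - 1/2)"
      by (simp add: algebra_simps power2_eq_square)
    have e: "(c+1)*(c+r) - 4*(2*c+1)*p = r*(c+1 - (2*c+1)*r)"
    proof -
      have "4*(2*c+1)*p = (2*c+1)*(4*p)" by (simp only: mult_ac)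
      also have "\<dots> = (2*c+1)*(r^2 + 1/2)" by (simp only: pe)
      finally show ?thesis using id cge by linarith
    qed
    have m1: "(2*c+1)*r \<le> (2*c+1)*c" using rc c(1) by (intro mult_left_mono) auto
    have m2: "(2*c+1)*c = c + 1" using cge by (simp add: algebra_simps)
    have "c+1 - (2*c+1)*r \<ge> 0" using m1 m2 by linarith
    hence "r*(c+1 - (2*c+1)*r) \<ge> 0" using r0 by (rule mult_nonneg_nonneg[rotated])
    thus ?thesis using e by linarith
  qed
  have "2*(2*c+1)^2 - 1 = 1 + 4*(2*c+1)"
  proof -
    have "(2*c+1)^2 = 4*(c*c) + 4*c + 1" by (simp add: power2_eq_square algebra_simps)
    thus ?thesis using cge by simp
  qed
  also have "\<dots> = 1 + 4*(2*c+1)*p/p" using pp by simp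
  also have "\<dots> \<le> 1 + (c+1)*(c+r)/p" 
  proof -
    have "4*(2*c+1)*p/p \<le> (c+1)*(c+r)/p" by (rule divide_right_mono[OF key]) (use pp in linarith)
    thus ?thesis by linarith
  qed
  also have "\<dots> = u*v + sqrt (u^2-1) * sqrt (v^2-1)" unfolding uv sq using pp by (simp add: field_simps)
  finally show "u*v + sqrt (u^2-1) * sqrt (v^2-1) \<ge> 2*(2*c+1)^2 - 1" .
qed


lemma arc_ineq:
  fixes u v w :: real
  assumes "u \<ge> 1" "v \<ge> 1" "w \<ge> 1" "u*v + sqrt (u^2-1) * sqrt (v^2-1) \<ge> 2*w^2 - 1"
  shows "arcosh u + arcosh v \<ge> 2 * arcosh w"
proof -
  have "cosh (2 * arcosh w) = 2*w^2 - 1" using assms by (simp add: cosh_double_cosh)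
  also have "\<dots> \<le> cosh (arcosh u + arcosh v)"
    using assms by (simp add: cosh_add sinh_arcosh_real)
  finally show ?thesis
    using assms by (subst (asm) cosh_real_nonneg_le_iff) auto
qed

theorem lemma4p2:
  fixes \<theta> :: real
  assumes "-2*pi < \<theta>" and "\<theta> < 2*pi"
  shows "octf \<theta> \<ge> 2 * (8 * arcosh (sqrt 2 + 1))"
proof -
  define a where "a = pi/4 + \<theta>/16"
  define c where "c = sqrt 2 / 2"
  have c: "c > 0" "c^2 = 1/2" unfolding c_def by (auto simp: power_divide)
  have e1: "pi/4 - \<theta>/16 = pi/2 - a" unfolding a_def by simp
  have sb: "sin (pi/4 - \<theta>/16) = cos a" unfolding e1 by (simp add: sin_cos_eq)
  have cb: "cos (pi/4 - \<theta>/16) = sin a" unfolding e1 by (simp add: cos_sin_eq)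
  have ab: "0 < a" "a < pi/2" unfolding a_def using assms by auto
  have sa: "sin a > 0" using ab by (intro sin_gt_zero) auto
  have ca: "cos a > 0" using ab by (intro cos_gt_zero_pi) auto
  have d: "sin a * cos a = cos (\<theta>/8) / 2"
  proof -
    have "2*a = pi/2 + \<theta>/8" unfolding a_def by simp
    hence "sin (2*a) = cos (\<theta>/8)" by (simp add: sin_add)
    thus ?thesis by (simp add: sin_double)
  qed
  have cg: "cos (\<theta>/8) > c"
  proof -
    have "cos \<bar>\<theta>/8\<bar> > cos (pi/4)"
      using assms by (subst cos_mono_less_eq) auto
    hence "cos (\<theta>/8) > cos (pi/4)" by (simp only: cos_abs_real)
    thus ?thesis by (simp add: cos_45 c_def)
  qed
  have ST: "(sin a)^2 * (cos a)^2 > 1/8"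
  proof -
    have "(sin a)^2 * (cos a)^2 = (cos (\<theta>/8))^2 / 4" unfolding power_mult_distrib[symmetric] d by (simp add: power_divide)
    moreover have "(cos (\<theta>/8))^2 > c^2" using cg c by (simp add: power_strict_mono)
    ultimately show ?thesis using c by simp
  qed
  have sum: "(sin a)^2 + (cos a)^2 = 1" by simp
  note A = alg[OF c, of "(sin a)^2" "(cos a)^2", OF _ _ sum ST]
  have w: "2*c+1 = sqrt 2 + 1" unfolding c_def by simp
  have o: "octf \<theta> = 8 * (arcosh ((c + (cos a)^2)/(sin a)^2) + arcosh ((c + (sin a)^2)/(cos a)^2))"
  proof -
    have "octf \<theta> = 8 * arcosh ((c + (cos a)^2)/(sin a)^2) + 8 * arcosh ((c + (sin a)^2)/(cos a)^2)"
      unfolding octf_def sb cb a_def[symmetric] cos_45 c_def[symmetric] ..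
    thus ?thesis by (simp only: distrib_left)
  qed
  have "arcosh ((c + (cos a)^2)/(sin a)^2) + arcosh ((c + (sin a)^2)/(cos a)^2) \<ge> 2 * arcosh (2*c+1)"
    using A sa ca c by (intro arc_ineq) auto
  thus ?thesis unfolding o w by simp
qed

end
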